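(* Let $V$ be a finite nonempty set of voters, $A$ a finite set of alternatives, and $F:\mathcal{P}(V,A)\to S_2(A)$ a consular election rule whose range graph $\mathcal{G}(F)$ satisfies edge-connectivity. Then for every linear order $L$ on $A$ there is a unique favourite committee of $L$ in the range of $F$.
   Context: $S_2(A)$ is the set of 2-element subsets of $A$; a consular election rule maps each profile (a linear order on $A$ for each voter) to an element of $S_2(A)$. The range graph $\mathcal{G}(F)$ has vertex set $A$ and edge set equal to the range of $F$. A graph satisfies edge-connectivity if whenever $\{a,b\}$ and $\{c,d\}$ are edges with $a,b,c,d$ pairwise distinct, then $\{a,c\}$ or $\{a,d\}$ is an edge, and $\{b,c\}$ or $\{b,d\}$ is an edge. For a linear order $L$ on $A$ and $X,Y\in S_2(A)$: $X\succeq^O Y$ iff the $L$-best element of $X$ is weakly $L$-above the $L$-best element of $Y$; $X\succeq^P Y$ iff the $L$-worst element of $X$ is weakly $L$-above the $L$-worst element of $Y$. A favourite committee of $L$ in $\mathcal{X}\subseteq S_2(A)$ is an element of $\mathcal{X}$ maximal in $\mathcal{X}$ under both $\succeq^O$ and $\succeq^P$. *)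

theory Defs
  imports Main "HOL-Library.FuncSet"
begin

text \<open>Convention: a linear order L on A is a relation with linear_order_on A L,
  and (x, y) \<in> L means x is ranked weakly above y.\<close>

definition S2 :: "'a set \<Rightarrow> 'a set set" where
  "S2 A = {X. X \<subseteq> A \<and> card X = 2}"

definition linear_orders :: "'a set \<Rightarrow> ('a \<times> 'a) set set" where
  "linear_orders A = {L. linear_order_on A L}"

definition profiles :: "'v set \<Rightarrow> 'a set \<Rightarrow> ('v \<Rightarrow> ('a \<times> 'a) set) set" where
  "profiles V A = (V \<rightarrow>\<^sub>E linear_orders A)"

definition consular_rule ::
  "'v set \<Rightarrow> 'a set \<Rightarrow> (('v \<Rightarrow> ('a \<times> 'a) set) \<Rightarrow> 'a set) \<Rightarrow> bool" where
  "consular_rule V A F \<longleftrightarrow> (\<forall>P \<in> profiles V A. F P \<in> S2 A)"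

definition range_edges ::
  "'v set \<Rightarrow> 'a set \<Rightarrow> (('v \<Rightarrow> ('a \<times> 'a) set) \<Rightarrow> 'a set) \<Rightarrow> 'a set set" where
  "range_edges V A F = F ` profiles V A"

definition edge_connected :: "'a set set \<Rightarrow> bool" where
  "edge_connected E \<longleftrightarrow>
     (\<forall>a b c d. {a, b} \<in> E \<and> {c, d} \<in> E \<and> distinct [a, b, c, d] \<longrightarrow>
        ({a, c} \<in> E \<or> {a, d} \<in> E) \<and> ({b, c} \<in> E \<or> {b, d} \<in> E))"

definition best :: "('a \<times> 'a) set \<Rightarrow> 'a set \<Rightarrow> 'a" where
  "best L X = (THE x. x \<in> X \<and> (\<forall>y \<in> X. (x, y) \<in> L))"

definition worst :: "('a \<times> 'a) set \<Rightarrow> 'a set \<Rightarrow> 'a" where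
  "worst L X = (THE x. x \<in> X \<and> (\<forall>y \<in> X. (y, x) \<in> L))"

definition geq_O :: "('a \<times> 'a) set \<Rightarrow> 'a set \<Rightarrow> 'a set \<Rightarrow> bool" where
  "geq_O L X Y \<longleftrightarrow> (best L X, best L Y) \<in> L"

definition geq_P :: "('a \<times> 'a) set \<Rightarrow> 'a set \<Rightarrow> 'a set \<Rightarrow> bool" where
  "geq_P L X Y \<longleftrightarrow> (worst L X, worst L Y) \<in> L"

definition maximal_in :: "('b \<Rightarrow> 'b \<Rightarrow> bool) \<Rightarrow> 'b set \<Rightarrow> 'b \<Rightarrow> bool" where
  "maximal_in R S X \<longleftrightarrow> X \<in> S \<and> (\<forall>Y \<in> S. R Y X \<longrightarrow> R X Y)"

definition favourite_committee :: "('a \<times> 'a) set \<Rightarrow> 'a set set \<Rightarrow> 'a set \<Rightarrow> bool" where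
  "favourite_committee L \<X> X \<longleftrightarrow> maximal_in (geq_O L) \<X> X \<and> maximal_in (geq_P L) \<X> X"

end

theory Submission
  imports Defs
begin

locale lo =
  fixes A :: "'a set" and L :: "('a \<times> 'a) set"
  assumes lin: "linear_order_on A L"
begin

lemma refl': "x \<in> A \<Longrightarrow> (x,x) \<in> L"
  using lin unfolding linear_order_on_def partial_order_on_def preorder_on_def refl_on_def by blast
lemma antisym': "(x,y) \<in> L \<Longrightarrow> (y,x) \<in> L \<Longrightarrow> x = y"
  using lin unfolding linear_order_on_def partial_order_on_def antisym_def by blast
lemma trans': "(x,y) \<in> L \<Longrightarrow> (y,z) \<in> L \<Longrightarrow> (x,z) \<in> L"
  using lin unfolding linear_order_on_def partial_order_on_def preorder_on_def trans_def by blast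
lemma total': "x \<in> A \<Longrightarrow> y \<in> A \<Longrightarrow> (x,y) \<in> L \<or> (y,x) \<in> L"
  using lin refl'[of x] unfolding linear_order_on_def total_on_def by metis

lemma best_pair: "x \<in> A \<Longrightarrow> y \<in> A \<Longrightarrow> x \<noteq> y \<Longrightarrow> (x,y) \<in> L \<Longrightarrow> best L {x,y} = x"
  unfolding best_def
  apply (rule the_equality)
  using refl' antisym' by blast+

lemma worst_pair: "x \<in> A \<Longrightarrow> y \<in> A \<Longrightarrow> x \<noteq> y \<Longrightarrow> (x,y) \<in> L \<Longrightarrow> worst L {x,y} = y"
  unfolding worst_def
  apply (rule the_equality)
  using refl' antisym' by blast+

lemma max_exists:
  assumes "finite S" "S \<noteq> {}" "f ` S \<subseteq> A"
  shows "\<exists>m\<in>S. \<forall>s\<in>S. (f m, f s) \<in> L"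
  using assms
proof (induction S rule: finite_ne_induct)
  case (singleton x) then show ?case using refl' by auto
next
  case (insert x S)
  then obtain m where m: "m \<in> S" "\<forall>s\<in>S. (f m, f s) \<in> L" by auto
  have "f x \<in> A" "f m \<in> A" using insert m by auto
  then consider "(f x, f m) \<in> L" | "(f m, f x) \<in> L" using total' by blast
  then show ?case
  proof cases
    case 1 then show ?thesis using m trans' refl' \<open>f x \<in> A\<close> by blast
  next
    case 2 then show ?thesis using m by blast
  qed
qed

end

lemma edge_form:
  assumes "linear_order_on A L" "X \<in> S2 A"
  shows "\<exists>x y. X = {x,y} \<and> x \<in> A \<and> y \<in> A \<and> x \<noteq> y \<and> (x,y) \<in> L"
proof -
  interpret lo A L using assms(1) by unfold_locales
  from assms(2) obtain x y where "X = {x,y}" "x \<noteq> y" "X \<subseteq> A"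
    unfolding S2_def by (auto simp: card_2_iff)
  then show ?thesis using total'[of x y] by (auto simp: insert_commute)
qed

theorem proposition34:
  fixes V :: "'v set" and A :: "'a set"
    and F :: "('v \<Rightarrow> ('a \<times> 'a) set) \<Rightarrow> 'a set"
  assumes "finite V" and "V \<noteq> {}" and "finite A"
    and "consular_rule V A F"
    and "edge_connected (range_edges V A F)"
    and "linear_order_on A L"
  shows "\<exists>!X. favourite_committee L (range_edges V A F) X"
proof -
  interpret lo A L using assms(6) by unfold_locales
  define E where "E = range_edges V A F"
  have ES2: "E \<subseteq> S2 A" using assms(4) unfolding E_def range_edges_def consular_rule_def by auto
  have "(\<lambda>v. if v \<in> V then L else undefined) \<in> profiles V A"
    using assms(6) unfolding profiles_def linear_orders_def by auto
  hence Ene: "E \<noteq> {}" unfolding E_def range_edges_def by blast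
  have "S2 A \<subseteq> Pow A" unfolding S2_def by auto
  hence Efin: "finite E" using ES2 assms(3) by (meson finite_Pow_iff finite_subset subset_trans)
  have ef: "\<And>X. X \<in> E \<Longrightarrow> \<exists>x y. X = {x,y} \<and> x \<in> A \<and> y \<in> A \<and> x \<noteq> y \<and> (x,y) \<in> L"
    using edge_form[OF assms(6)] ES2 by blast
  have bA: "best L ` E \<subseteq> A"
  proof
    fix z assume "z \<in> best L ` E"
    then obtain X where "X \<in> E" "z = best L X" by auto
    with ef[OF this(1)] best_pair show "z \<in> A" by auto
  qed
  have wA: "worst L ` E \<subseteq> A"
  proof
    fix z assume "z \<in> worst L ` E"
    then obtain X where "X \<in> E" "z = worst L X" by auto
    with ef[OF this(1)] worst_pair show "z \<in> A" by auto
  qed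
  obtain Xa where Xa: "Xa \<in> E" "\<forall>Y\<in>E. (best L Xa, best L Y) \<in> L"
    using max_exists[OF Efin Ene bA] by blast
  obtain Xw where Xw: "Xw \<in> E" "\<forall>Y\<in>E. (worst L Xw, worst L Y) \<in> L"
    using max_exists[OF Efin Ene wA] by blast
  obtain a b where ab: "Xa = {a,b}" "a \<in> A" "b \<in> A" "a \<noteq> b" "(a,b) \<in> L" using ef[OF Xa(1)] by blast
  obtain c w where cw: "Xw = {c,w}" "c \<in> A" "w \<in> A" "c \<noteq> w" "(c,w) \<in> L" using ef[OF Xw(1)] by blast
  have ba: "best L Xa = a" using best_pair ab by blast
  have ww: "worst L Xw = w" using worst_pair cw by blast
  have maxb: "\<And>Y. Y \<in> E \<Longrightarrow> (a, best L Y) \<in> L" using Xa ba by auto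
  have maxw: "\<And>Y. Y \<in> E \<Longrightarrow> (w, worst L Y) \<in> L" using Xw ww by auto
  have ac: "(a,c) \<in> L" using maxb[OF Xw(1)] best_pair cw by auto
  have wb: "(w,b) \<in> L" using maxw[OF Xa(1)] worst_pair ab by auto
  have noc: "{a,c} \<notin> E" if "a \<noteq> c"
  proof
    assume "{a,c} \<in> E"
    hence "(w,c) \<in> L" using maxw[of "{a,c}"] worst_pair[of a c] ab cw ac that by auto
    thus False using antisym' cw by blast
  qed
  have aw: "a \<noteq> w" using ac cw antisym' by blast
  have awL: "(a,w) \<in> L" using ac cw trans' by blast
  have inE: "{a,w} \<in> E"
  proof (cases "c = a")
    case True then show ?thesis using Xw cw by simp
  next
    case ca: False
    show ?thesis
    proof (cases "b = w")
      case True then show ?thesis using Xa ab by simp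
    next
      case bw: False
      have bc: "b \<noteq> c" using noc ca Xa ab by auto
      have "distinct [a,b,c,w]" using ab cw ca bw bc aw by auto
      moreover have "{a,b} \<in> E" "{c,w} \<in> E" using Xa Xw ab cw by auto
      ultimately have "{a,c} \<in> E \<or> {a,w} \<in> E"
        using assms(5)[unfolded edge_connected_def, rule_format, of a b c w] unfolding E_def by blast
      then show ?thesis using noc ca by auto
    qed
  qed
  have bX: "best L {a,w} = a" and wX: "worst L {a,w} = w"
    using best_pair worst_pair ab cw aw awL by auto
  show ?thesis
  proof (rule ex1I[of _ "{a,w}"])
    show "favourite_committee L (range_edges V A F) {a,w}"
      unfolding favourite_committee_def maximal_in_def geq_O_def geq_P_def E_def[symmetric]
      using inE bX wX maxb maxw by auto
  next
    fix Z assume "favourite_committee L (range_edges V A F) Z"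
    hence Z: "Z \<in> E" "geq_O L Xa Z \<longrightarrow> geq_O L Z Xa" "geq_P L Xw Z \<longrightarrow> geq_P L Z Xw"
      unfolding favourite_committee_def maximal_in_def E_def[symmetric] using Xa Xw by auto
    obtain p q where pq: "Z = {p,q}" "p \<in> A" "q \<in> A" "p \<noteq> q" "(p,q) \<in> L" using ef[OF Z(1)] by blast
    have bZ: "best L Z = p" and wZ: "worst L Z = q" using best_pair worst_pair pq by auto
    have "(p,a) \<in> L" using Z(2) maxb[OF Z(1)] ba bZ unfolding geq_O_def by auto
    hence "p = a" using maxb[OF Z(1)] bZ antisym' by auto
    have "(q,w) \<in> L" using Z(3) maxw[OF Z(1)] ww wZ unfolding geq_P_def by auto
    hence "q = w" using maxw[OF Z(1)] wZ antisym' by auto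
    show "Z = {a,w}" using pq \<open>p = a\<close> \<open>q = w\<close> by simp
  qed
qed

end
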